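(* Let $P_n$ be the law of $\pi_1$ for $\pi$ uniform on $\mathrm{PF}_n$, and $\bar P_n$ the uniform distribution on $[n]$ (the law of $f_1$ for $f$ uniform among all functions $[n]\to[n]$). Then the total variation distance $\|P_n-\bar P_n\|=\frac12\sum_{j=1}^n|P_n(j)-\bar P_n(j)|$ tends to $0$ as $n\to\infty$.
   Context: A parking function of length $n$ is a sequence $(\pi_1,\dots,\pi_n)$ with $1\le\pi_i\le n$ such that $\#\{t:\pi_t\le i\}\ge i$ for all $1\le i\le n$; $\mathrm{PF}_n$ denotes the set of these. *)

theory Defs
  imports "HOL-Analysis.Analysis"
begin

text \<open>A sequence (pi_1,...,pi_n) is represented as a function on the index set
  {0..<n} (position t corresponds to pi_(t+1)), extensional (undefined outside),
  with values in {1..n}.\<close>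

definition parking_functions :: "nat \<Rightarrow> (nat \<Rightarrow> nat) set" where
  "parking_functions n =
     {p \<in> {0..<n} \<rightarrow>\<^sub>E {1..n}.
        \<forall>i\<in>{1..n}. card {t \<in> {0..<n}. p t \<le> i} \<ge> i}"

definition P_first :: "nat \<Rightarrow> nat \<Rightarrow> real" where
  "P_first n j = real (card {p \<in> parking_functions n. p 0 = j}) / real (card (parking_functions n))"

definition Pbar_first :: "nat \<Rightarrow> nat \<Rightarrow> real" where
  "Pbar_first n j = real (card {f \<in> {0..<n} \<rightarrow>\<^sub>E {1..n}. f 0 = j}) / real (card ({0..<n} \<rightarrow>\<^sub>E {1..n}))"

definition tv_dist :: "nat \<Rightarrow> real" where
  "tv_dist n = (1/2) * (\<Sum>j=1..n. \<bar>P_first n j - Pbar_first n j\<bar>)"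

end

theory Submission
  imports Defs
begin

definition PFon :: "nat set \<Rightarrow> (nat \<Rightarrow> nat) set" where
  "PFon I = {p \<in> I \<rightarrow>\<^sub>E {1..card I}. \<forall>i\<in>{1..card I}. card {t \<in> I. p t \<le> i} \<ge> i}"

lemma pf_eq: "parking_functions n = PFon {0..<n}"
  by (simp add: parking_functions_def PFon_def)

lemma PFon_map:
  assumes h: "bij_betw h J I" and p: "p \<in> PFon I"
  shows "restrict (p \<circ> h) J \<in> PFon J"
proof -
  have cJ: "card J = card I" using bij_betw_same_card[OF h] .
  have inj: "inj_on h J" and img: "h ` J = I" using h by (auto simp: bij_betw_def)
  have cnt: "card {t \<in> J. restrict (p \<circ> h) J t \<le> i} = card {x \<in> I. p x \<le> i}" for i
  proof -
    have e1: "{t \<in> J. restrict (p \<circ> h) J t \<le> i} = {t \<in> J. p (h t) \<le> i}" by auto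
    have e2: "h ` {t \<in> J. p (h t) \<le> i} = {x \<in> I. p x \<le> i}" unfolding img[symmetric] by auto
    have e3: "inj_on h {t \<in> J. p (h t) \<le> i}" using inj by (rule inj_on_subset) auto
    show ?thesis unfolding e1 card_image[OF e3, symmetric] e2 ..
  qed
  have p1: "p \<in> I \<rightarrow>\<^sub>E {1..card I}" and p2: "\<forall>i\<in>{1..card I}. card {t \<in> I. p t \<le> i} \<ge> i"
    using p unfolding PFon_def by auto
  have m1: "restrict (p \<circ> h) J \<in> J \<rightarrow>\<^sub>E {1..card J}"
    using p1 img unfolding cJ by (auto simp: PiE_def Pi_def)
  have m2: "\<forall>i\<in>{1..card J}. card {t \<in> J. restrict (p \<circ> h) J t \<le> i} \<ge> i"
    unfolding cnt cJ using p2 by blast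
  show ?thesis unfolding PFon_def using m1 m2 by blast
qed

lemma PFon_card_bij:
  assumes h: "bij_betw h J I"
  shows "card (PFon I) = card (PFon J)"
proof -
  define g where "g = the_inv_into J h"
  have g: "bij_betw g I J" unfolding g_def by (rule bij_betw_the_inv_into[OF h])
  have gh: "g (h t) = t" if "t \<in> J" for t
    unfolding g_def using h that by (simp add: bij_betw_def the_inv_into_f_f)
  have hg: "h (g x) = x" if "x \<in> I" for x
    unfolding g_def using h that by (simp add: bij_betw_def f_the_inv_into_f)
  have hJ: "h t \<in> I" if "t \<in> J" for t using h that by (auto simp: bij_betw_def)
  have gI: "g x \<in> J" if "x \<in> I" for x using g that by (auto simp: bij_betw_def)
  have "bij_betw (\<lambda>p. restrict (p \<circ> h) J) (PFon I) (PFon J)"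
  proof (rule bij_betw_byWitness[where f'="\<lambda>q. restrict (q \<circ> g) I"])
    show "\<forall>p\<in>PFon I. restrict (restrict (p \<circ> h) J \<circ> g) I = p"
    proof
      fix p assume p: "p \<in> PFon I"
      then have ext: "p \<in> extensional I" unfolding PFon_def by (auto simp: PiE_def)
      show "restrict (restrict (p \<circ> h) J \<circ> g) I = p"
      proof
        fix x show "restrict (restrict (p \<circ> h) J \<circ> g) I x = p x"
          using ext gI hg by (cases "x \<in> I") (auto simp: extensional_def)
      qed
    qed
    show "\<forall>q\<in>PFon J. restrict (restrict (q \<circ> g) I \<circ> h) J = q"
    proof
      fix q assume q: "q \<in> PFon J"
      then have ext: "q \<in> extensional J" unfolding PFon_def by (auto simp: PiE_def)
      show "restrict (restrict (q \<circ> g) I \<circ> h) J = q"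
      proof
        fix x show "restrict (restrict (q \<circ> g) I \<circ> h) J x = q x"
          using ext hJ gh by (cases "x \<in> J") (auto simp: extensional_def)
      qed
    qed
    show "(\<lambda>p. restrict (p \<circ> h) J) ` PFon I \<subseteq> PFon J" using PFon_map[OF h] by auto
    show "(\<lambda>q. restrict (q \<circ> g) I) ` PFon J \<subseteq> PFon I" using PFon_map[OF g] by auto
  qed
  then show ?thesis by (rule bij_betw_same_card)
qed

definition pc :: "nat \<Rightarrow> nat" where "pc m = card (PFon {0..<m})"

lemma PFon_card: assumes "finite I" shows "card (PFon I) = pc (card I)"
proof -
  obtain h where "bij_betw h {0..<card I} I" using ex_bij_betw_nat_finite[OF assms] by blast
  then show ?thesis unfolding pc_def by (rule PFon_card_bij)
qed

lemma finite_PFon: "finite I \<Longrightarrow> finite (PFon I)"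
  unfolding PFon_def by (rule finite_subset[of _ "I \<rightarrow>\<^sub>E {1..card I}"]) (auto intro: finite_PiE)


definition cnt :: "nat \<Rightarrow> (nat \<Rightarrow> nat) \<Rightarrow> nat \<Rightarrow> nat" where
  "cnt a r i = card {t \<in> {1..a}. r t \<le> i}"

definition Dk :: "nat \<Rightarrow> nat \<Rightarrow> (nat \<Rightarrow> nat) set" where
  "Dk a k = {r \<in> {1..a} \<rightarrow>\<^sub>E {1..Suc a}. (\<forall>i\<in>{1..<k}. i \<le> cnt a r i) \<and> cnt a r k = k - 1
      \<and> (\<forall>i\<in>{k<..Suc a}. i \<le> cnt a r i + 1)}"

definition Sj :: "nat \<Rightarrow> nat \<Rightarrow> (nat \<Rightarrow> nat) set" where
  "Sj a j = {p \<in> PFon {0..<Suc a}. p 0 = j}"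

lemma cnt_le: "cnt a r i \<le> a"
  unfolding cnt_def by (rule order.trans[OF card_mono[of "{1..a}"]]) auto

lemma count_split:
  "card {t \<in> {0..<Suc a}. p t \<le> i} = (if p 0 \<le> i then 1 else 0) + cnt a p i"
proof -
  have e: "{t \<in> {0..<Suc a}. p t \<le> i} = (if p 0 \<le> i then insert 0 {t \<in> {1..a}. p t \<le> i} else {t \<in> {1..a}. p t \<le> i})"
    by (auto simp: Suc_le_eq intro!: gr0I)
  show ?thesis unfolding e cnt_def by simp
qed

lemma cnt_cong: "(\<And>t. t \<in> {1..a} \<Longrightarrow> p t = q t) \<Longrightarrow> cnt a p i = cnt a q i"
  unfolding cnt_def by (rule arg_cong[where f=card]) auto

lemma finite_Dk: "finite (Dk a k)"
  unfolding Dk_def by (rule finite_subset[of _ "{1..a} \<rightarrow>\<^sub>E {1..Suc a}"]) (auto intro: finite_PiE)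

lemma Dk_disj: assumes "1 \<le> k" "k < k'" shows "Dk a k \<inter> Dk a k' = {}"
  using assms unfolding Dk_def by force

lemma Sj_bij:
  assumes j: "j \<in> {1..Suc a}"
  shows "bij_betw (\<lambda>p. restrict p {1..a}) (Sj a j) (\<Union>k\<in>{j..Suc a}. Dk a k)"
proof (rule bij_betw_byWitness[where f'="\<lambda>r. r(0 := j)"])
  show "\<forall>p\<in>Sj a j. (restrict p {1..a})(0 := j) = p"
  proof
    fix p assume p: "p \<in> Sj a j"
    then have ext: "p \<in> extensional {0..<Suc a}" and p0: "p 0 = j"
      unfolding Sj_def PFon_def by (auto simp: PiE_def)
    show "(restrict p {1..a})(0 := j) = p"
    proof
      fix t show "((restrict p {1..a})(0 := j)) t = p t"
        using ext p0 by (cases "t = 0"; cases "t \<in> {1..a}") (auto simp: extensional_def)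
    qed
  qed
  show "\<forall>r\<in>(\<Union>k\<in>{j..Suc a}. Dk a k). restrict (r(0 := j)) {1..a} = r"
  proof
    fix r assume "r \<in> (\<Union>k\<in>{j..Suc a}. Dk a k)"
    then have ext: "r \<in> extensional {1..a}" unfolding Dk_def by (auto simp: PiE_def)
    show "restrict (r(0 := j)) {1..a} = r"
    proof
      fix t show "restrict (r(0 := j)) {1..a} t = r t"
        using ext by (cases "t \<in> {1..a}") (auto simp: extensional_def)
    qed
  qed
  show "(\<lambda>p. restrict p {1..a}) ` Sj a j \<subseteq> (\<Union>k\<in>{j..Suc a}. Dk a k)"
  proof
    fix r assume "r \<in> (\<lambda>p. restrict p {1..a}) ` Sj a j"
    then obtain p where p: "p \<in> Sj a j" and r: "r = restrict p {1..a}" by blast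
    have pf: "p \<in> {0..<Suc a} \<rightarrow>\<^sub>E {1..Suc a}" and p0: "p 0 = j"
      and cond: "\<forall>i\<in>{1..Suc a}. i \<le> card {t \<in> {0..<Suc a}. p t \<le> i}"
      using p unfolding Sj_def PFon_def by auto
    have cr: "cnt a r i = cnt a p i" for i unfolding r by (rule cnt_cong) simp
    have C: "i \<le> (if j \<le> i then 1 else 0) + cnt a r i" if "i \<in> {1..Suc a}" for i
    proof -
      have "i \<le> card {t \<in> {0..<Suc a}. p t \<le> i}" using cond that by blast
      then show ?thesis using count_split[of a p i] p0 cr by simp
    qed
    define k where "k = (LEAST i. 1 \<le> i \<and> cnt a r i < i)"
    have ex: "1 \<le> Suc a \<and> cnt a r (Suc a) < Suc a" using cnt_le[of a r "Suc a"] by simp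
    have k1: "1 \<le> k \<and> cnt a r k < k" unfolding k_def by (rule LeastI[of _ "Suc a"]) (rule ex)
    have kle: "k \<le> Suc a" unfolding k_def by (rule Least_le) (rule ex)
    have below: "i \<le> cnt a r i" if "i \<in> {1..<k}" for i
      using not_less_Least[of i "\<lambda>i. 1 \<le> i \<and> cnt a r i < i"] that unfolding k_def[symmetric] by auto
    have jk: "j \<le> k"
    proof (rule ccontr)
      assume "\<not> j \<le> k"
      then show False using C[of k] k1 kle by simp
    qed
    have "k \<le> 1 + cnt a r k" using C[of k] k1 kle jk by simp
    then have ck: "cnt a r k = k - 1" using k1 by linarith
    have above: "i \<le> cnt a r i + 1" if "i \<in> {k<..Suc a}" for i
      using C[of i] that k1 by (auto split: if_splits)
    have rfun: "r \<in> {1..a} \<rightarrow>\<^sub>E {1..Suc a}" using pf unfolding r by (auto simp: PiE_def Pi_def)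
    have "r \<in> Dk a k" unfolding Dk_def using rfun below ck above by blast
    moreover have "k \<in> {j..Suc a}" using jk kle by simp
    ultimately show "r \<in> (\<Union>k\<in>{j..Suc a}. Dk a k)" by (rule UN_I[rotated])
  qed
  show "(\<lambda>r. r(0 := j)) ` (\<Union>k\<in>{j..Suc a}. Dk a k) \<subseteq> Sj a j"
  proof
    fix p assume "p \<in> (\<lambda>r. r(0 := j)) ` (\<Union>k\<in>{j..Suc a}. Dk a k)"
    then obtain r where p: "p = r(0 := j)" and r0: "r \<in> (\<Union>k\<in>{j..Suc a}. Dk a k)" by (rule imageE)
    from r0 obtain k where k: "k \<in> {j..Suc a}" and r: "r \<in> Dk a k" by (rule UN_E)
    have rf: "r \<in> {1..a} \<rightarrow>\<^sub>E {1..Suc a}" and below: "\<forall>i\<in>{1..<k}. i \<le> cnt a r i"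
      and ck: "cnt a r k = k - 1" and above: "\<forall>i\<in>{k<..Suc a}. i \<le> cnt a r i + 1"
      using r unfolding Dk_def by auto
    have cp: "cnt a p i = cnt a r i" for i unfolding p by (rule cnt_cong) simp
    have pfun: "p \<in> {0..<Suc a} \<rightarrow>\<^sub>E {1..Suc a}"
      using rf j k unfolding p by (auto simp: PiE_def Pi_def extensional_def)
    have "i \<le> card {t \<in> {0..<Suc a}. p t \<le> i}" if i: "i \<in> {1..Suc a}" for i
    proof -
      have eq: "card {t \<in> {0..<Suc a}. p t \<le> i} = (if j \<le> i then 1 else 0) + cnt a r i"
        using count_split[of a p i] cp by (simp add: p)
      consider "i < k" | "i = k" | "k < i" by linarith
      then show ?thesis
      proof cases
        case 1
        then have "i \<le> cnt a r i" using below i by auto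
        then show ?thesis using eq by simp
      next
        case 2 then show ?thesis using ck eq k i by auto
      next
        case 3 then show ?thesis using above i eq k by auto
      qed
    qed
    then show "p \<in> Sj a j" unfolding Sj_def PFon_def using pfun p by simp
  qed
qed

lemma card_Sj:
  assumes j: "j \<in> {1..Suc a}"
  shows "card (Sj a j) = (\<Sum>k\<in>{j..Suc a}. card (Dk a k))"
proof -
  have "card (Sj a j) = card (\<Union>k\<in>{j..Suc a}. Dk a k)" by (rule bij_betw_same_card[OF Sj_bij[OF j]])
  also have "\<dots> = (\<Sum>k\<in>{j..Suc a}. card (Dk a k))"
  proof (rule card_UN_disjoint)
    show "\<forall>i\<in>{j..Suc a}. \<forall>k\<in>{j..Suc a}. i \<noteq> k \<longrightarrow> Dk a i \<inter> Dk a k = {}"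
    proof (intro ballI impI)
      fix i k assume "i \<in> {j..Suc a}" "k \<in> {j..Suc a}" "i \<noteq> k"
      then show "Dk a i \<inter> Dk a k = {}" using j Dk_disj[of i k a] Dk_disj[of k i a] by (cases "i < k") auto
    qed
  qed (auto simp: finite_Dk)
  finally show ?thesis .
qed


definition Phi :: "nat \<Rightarrow> nat \<Rightarrow> nat set \<times> (nat \<Rightarrow> nat) \<times> (nat \<Rightarrow> nat) \<Rightarrow> nat \<Rightarrow> nat" where
  "Phi a k x = (\<lambda>t. if t \<in> fst x then fst (snd x) t else if t \<in> {1..a} then snd (snd x) t + k else undefined)"

definition Psi :: "nat \<Rightarrow> nat \<Rightarrow> (nat \<Rightarrow> nat) \<Rightarrow> nat set \<times> (nat \<Rightarrow> nat) \<times> (nat \<Rightarrow> nat)" where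
  "Psi a k r = ({t \<in> {1..a}. r t < k}, restrict r {t \<in> {1..a}. r t < k},
                restrict (\<lambda>t. r t - k) ({1..a} - {t \<in> {1..a}. r t < k}))"

lemma PFon_D:
  assumes "u \<in> PFon S"
  shows "\<And>t. t \<in> S \<Longrightarrow> 1 \<le> u t \<and> u t \<le> card S" "\<And>t. t \<notin> S \<Longrightarrow> u t = undefined"
    "\<And>i. i \<in> {1..card S} \<Longrightarrow> i \<le> card {t \<in> S. u t \<le> i}"
  using assms unfolding PFon_def by (auto simp: PiE_def Pi_def extensional_def)

lemma Dk_card_dom:
  assumes k: "k \<in> {1..Suc a}"
  defines "Dom \<equiv> (SIGMA S:{S. S \<subseteq> {1..a} \<and> card S = k - 1}. PFon S \<times> PFon ({1..a} - S))"
  shows "bij_betw (Phi a k) Dom (Dk a k)"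
proof (rule bij_betw_byWitness[where f'="Psi a k"])
  show "\<forall>x\<in>Dom. Psi a k (Phi a k x) = x"
  proof
    fix x assume x: "x \<in> Dom"
    obtain S u v where xe: "x = (S, u, v)" by (cases x) auto
    have S: "S \<subseteq> {1..a}" "card S = k - 1" and u: "u \<in> PFon S" and v: "v \<in> PFon ({1..a} - S)"
      using x unfolding Dom_def xe by auto
    have fS: "finite S" using S(1) finite_subset by blast
    have Seq: "{t \<in> {1..a}. Phi a k x t < k} = S"
    proof (rule set_eqI)
      fix t show "t \<in> {t \<in> {1..a}. Phi a k x t < k} \<longleftrightarrow> t \<in> S"
        using PFon_D(1)[OF u, of t] S k unfolding Phi_def xe by auto
    qed
    have u': "restrict (Phi a k x) S = u"
    proof
      fix t show "restrict (Phi a k x) S t = u t"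
        using PFon_D(2)[OF u, of t] unfolding Phi_def xe by auto
    qed
    have v': "restrict (\<lambda>t. Phi a k x t - k) ({1..a} - S) = v"
    proof
      fix t show "restrict (\<lambda>t. Phi a k x t - k) ({1..a} - S) t = v t"
        using PFon_D(2)[OF v, of t] unfolding Phi_def xe by auto
    qed
    show "Psi a k (Phi a k x) = x" unfolding Psi_def Seq u' v' by (simp add: xe)
  qed
  show "\<forall>r\<in>Dk a k. Phi a k (Psi a k r) = r"
  proof
    fix r assume r: "r \<in> Dk a k"
    then have ext: "r \<in> extensional {1..a}" unfolding Dk_def by (auto simp: PiE_def)
    show "Phi a k (Psi a k r) = r"
    proof
      fix t show "Phi a k (Psi a k r) t = r t"
        using ext unfolding Phi_def Psi_def by (auto simp: extensional_def)
    qed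
  qed
  show "Phi a k ` Dom \<subseteq> Dk a k"
  proof
    fix r assume "r \<in> Phi a k ` Dom"
    then obtain x where r: "r = Phi a k x" and x: "x \<in> Dom" by (rule imageE)
    obtain S u v where xe: "x = (S, u, v)" by (cases x) auto
    have S: "S \<subseteq> {1..a}" "card S = k - 1" and u: "u \<in> PFon S" and v: "v \<in> PFon ({1..a} - S)"
      using x unfolding Dom_def xe by auto
    have fS: "finite S" using S(1) finite_subset by blast
    have cRS: "card ({1..a} - S) = Suc a - k" using S k fS by (simp add: card_Diff_subset)
    have rS: "t \<in> S \<Longrightarrow> r t = u t" for t unfolding r Phi_def xe by simp
    have rR: "t \<in> {1..a} - S \<Longrightarrow> r t = v t + k" for t unfolding r Phi_def xe by simp
    have rO: "t \<notin> {1..a} \<Longrightarrow> r t = undefined" for t using S(1) unfolding r Phi_def xe by auto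
    have rfun: "r \<in> {1..a} \<rightarrow>\<^sub>E {1..Suc a}"
    proof (rule PiE_I)
      fix t assume t: "t \<in> {1..a}"
      show "r t \<in> {1..Suc a}"
      proof (cases "t \<in> S")
        case True then show ?thesis using rS PFon_D(1)[OF u True] S k by auto
      next
        case False
        then have "t \<in> {1..a} - S" using t by simp
        then show ?thesis using rR PFon_D(1)[OF v] cRS k by fastforce
      qed
    qed (rule rO)
    have low: "{t \<in> {1..a}. r t \<le> i} = {t \<in> S. u t \<le> i}" if "i < k" for i
    proof (rule set_eqI)
      fix t show "t \<in> {t \<in> {1..a}. r t \<le> i} \<longleftrightarrow> t \<in> {t \<in> S. u t \<le> i}"
        using rS rR S(1) that by (cases "t \<in> S") auto
    qed
    have atk: "{t \<in> {1..a}. r t \<le> k} = S"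
    proof (rule set_eqI)
      fix t show "t \<in> {t \<in> {1..a}. r t \<le> k} \<longleftrightarrow> t \<in> S"
        using rS rR S PFon_D(1)[OF u, of t] PFon_D(1)[OF v, of t] by (cases "t \<in> S") auto
    qed
    have high: "{t \<in> {1..a}. r t \<le> i} = S \<union> {t \<in> {1..a} - S. v t \<le> i - k}" if "k < i" for i
    proof (rule set_eqI)
      fix t show "t \<in> {t \<in> {1..a}. r t \<le> i} \<longleftrightarrow> t \<in> S \<union> {t \<in> {1..a} - S. v t \<le> i - k}"
        using rS rR S PFon_D(1)[OF u, of t] that by (cases "t \<in> S") auto
    qed
    have c1: "\<forall>i\<in>{1..<k}. i \<le> cnt a r i"
    proof
      fix i assume i: "i \<in> {1..<k}"
      have "i \<le> card {t \<in> S. u t \<le> i}" using PFon_D(3)[OF u, of i] i S by auto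
      then show "i \<le> cnt a r i" unfolding cnt_def using low[of i] i by simp
    qed
    have c2: "cnt a r k = k - 1" unfolding cnt_def atk using S by simp
    have c3: "\<forall>i\<in>{k<..Suc a}. i \<le> cnt a r i + 1"
    proof
      fix i assume i: "i \<in> {k<..Suc a}"
      have "i - k \<le> card {t \<in> {1..a} - S. v t \<le> i - k}" using PFon_D(3)[OF v, of "i - k"] i cRS by (simp; linarith)
      moreover have "cnt a r i = card S + card {t \<in> {1..a} - S. v t \<le> i - k}"
      proof -
        have hi: "k < i" using i by simp
        show ?thesis unfolding cnt_def high[OF hi] using fS by (subst card_Un_disjoint) auto
      qed
      ultimately show "i \<le> cnt a r i + 1" using S i k by auto
    qed
    show "r \<in> Dk a k" unfolding Dk_def using rfun c1 c2 c3 by blast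
  qed
  show "Psi a k ` Dk a k \<subseteq> Dom"
  proof
    fix x assume "x \<in> Psi a k ` Dk a k"
    then obtain r where x: "x = Psi a k r" and r: "r \<in> Dk a k" by (rule imageE)
    have rf: "r \<in> {1..a} \<rightarrow>\<^sub>E {1..Suc a}" and below: "\<forall>i\<in>{1..<k}. i \<le> cnt a r i"
      and ck: "cnt a r k = k - 1" and above: "\<forall>i\<in>{k<..Suc a}. i \<le> cnt a r i + 1"
      using r unfolding Dk_def by auto
    define S where "S = {t \<in> {1..a}. r t < k}"
    have rv: "t \<in> {1..a} \<Longrightarrow> 1 \<le> r t \<and> r t \<le> Suc a" for t using rf by (auto simp: PiE_def Pi_def)
    have SK: "S = {t \<in> {1..a}. r t \<le> k}"
    proof (cases "k = 1")
      case True
      have "card {t \<in> {1..a}. r t \<le> k} = 0" using ck True unfolding cnt_def by simp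
      then have "{t \<in> {1..a}. r t \<le> k} = {}" by simp
      moreover have "S = {}" unfolding S_def using rv True by fastforce
      ultimately show ?thesis by simp
    next
      case False
      then have k2: "2 \<le> k" using k by simp
      have "k - 1 \<le> cnt a r (k - 1)" using below k2 by auto
      moreover have sub: "{t \<in> {1..a}. r t \<le> k - 1} \<subseteq> {t \<in> {1..a}. r t \<le> k}" by auto
      moreover have "card {t \<in> {1..a}. r t \<le> k - 1} \<le> card {t \<in> {1..a}. r t \<le> k}"
        by (rule card_mono[OF _ sub]) simp
      ultimately have cc: "card {t \<in> {1..a}. r t \<le> k - 1} = card {t \<in> {1..a}. r t \<le> k}"
        using ck unfolding cnt_def by linarith
      have "{t \<in> {1..a}. r t \<le> k - 1} = {t \<in> {1..a}. r t \<le> k}"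
        by (rule card_subset_eq) (use cc in auto)
      moreover have "S = {t \<in> {1..a}. r t \<le> k - 1}" unfolding S_def using k2 by auto
      ultimately show ?thesis by simp
    qed
    have Ssub: "S \<subseteq> {1..a}" unfolding S_def by auto
    have fS: "finite S" using Ssub finite_subset by blast
    have cS: "card S = k - 1" using ck unfolding cnt_def SK .
    have cRS: "card ({1..a} - S) = Suc a - k" using cS Ssub k fS by (simp add: card_Diff_subset)
    have big: "t \<in> {1..a} - S \<Longrightarrow> k < r t" for t unfolding SK by auto
    have u: "restrict r S \<in> PFon S"
    proof -
      have "restrict r S \<in> S \<rightarrow>\<^sub>E {1..card S}"
        using rv Ssub cS unfolding S_def by (auto simp: PiE_def Pi_def)
      moreover have "\<forall>i\<in>{1..card S}. i \<le> card {t \<in> S. restrict r S t \<le> i}"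
      proof
        fix i assume i: "i \<in> {1..card S}"
        have "{t \<in> S. restrict r S t \<le> i} = {t \<in> {1..a}. r t \<le> i}" unfolding S_def using i cS by auto
        then show "i \<le> card {t \<in> S. restrict r S t \<le> i}" using below i cS unfolding cnt_def by auto
      qed
      ultimately show ?thesis unfolding PFon_def by blast
    qed
    have v: "restrict (\<lambda>t. r t - k) ({1..a} - S) \<in> PFon ({1..a} - S)"
    proof -
      have "restrict (\<lambda>t. r t - k) ({1..a} - S) \<in> ({1..a} - S) \<rightarrow>\<^sub>E {1..card ({1..a} - S)}"
      proof (rule PiE_I)
        fix t assume t: "t \<in> {1..a} - S"
        have "k < r t" "r t \<le> Suc a" using big[OF t] rv t by auto
        then show "restrict (\<lambda>t. r t - k) ({1..a} - S) t \<in> {1..card ({1..a} - S)}"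
          using t cRS by auto
      qed auto
      moreover have "\<forall>i\<in>{1..card ({1..a} - S)}. i \<le> card {t \<in> {1..a} - S. restrict (\<lambda>t. r t - k) ({1..a} - S) t \<le> i}"
      proof
        fix i assume i: "i \<in> {1..card ({1..a} - S)}"
        have e: "{t \<in> {1..a}. r t \<le> k + i} = S \<union> {t \<in> {1..a} - S. restrict (\<lambda>t. r t - k) ({1..a} - S) t \<le> i}"
          unfolding SK using big by auto
        have "cnt a r (k + i) = card S + card {t \<in> {1..a} - S. restrict (\<lambda>t. r t - k) ({1..a} - S) t \<le> i}"
          unfolding cnt_def e using fS by (subst card_Un_disjoint) auto
        moreover have "k + i \<le> cnt a r (k + i) + 1" using above i cRS by auto
        ultimately show "i \<le> card {t \<in> {1..a} - S. restrict (\<lambda>t. r t - k) ({1..a} - S) t \<le> i}"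
          using cS k by simp
      qed
      ultimately show ?thesis unfolding PFon_def by blast
    qed
    have "x = (S, restrict r S, restrict (\<lambda>t. r t - k) ({1..a} - S))" unfolding x Psi_def S_def ..
    then show "x \<in> Dom" unfolding Dom_def using Ssub cS u v by simp
  qed
qed

lemma card_Dk:
  assumes k: "k \<in> {1..Suc a}"
  shows "card (Dk a k) = (a choose (k - 1)) * pc (k - 1) * pc (Suc a - k)"
proof -
  define Sub where "Sub = {S. S \<subseteq> {1..a} \<and> card S = k - 1}"
  have "card (Dk a k) = card (SIGMA S:Sub. PFon S \<times> PFon ({1..a} - S))"
    unfolding Sub_def using bij_betw_same_card[OF Dk_card_dom[OF k]] by simp
  also have "\<dots> = (\<Sum>S\<in>Sub. card (PFon S \<times> PFon ({1..a} - S)))"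
  proof (rule card_SigmaI)
    show "finite Sub" unfolding Sub_def by (rule finite_subset[of _ "Pow {1..a}"]) auto
    show "\<forall>S\<in>Sub. finite (PFon S \<times> PFon ({1..a} - S))"
    proof
      fix S assume "S \<in> Sub"
      then have "finite S" unfolding Sub_def by (auto intro: finite_subset)
      then show "finite (PFon S \<times> PFon ({1..a} - S))" by (intro finite_cartesian_product finite_PFon) auto
    qed
  qed
  also have "\<dots> = (\<Sum>S\<in>Sub. pc (k - 1) * pc (Suc a - k))"
  proof (rule sum.cong[OF refl])
    fix S assume S: "S \<in> Sub"
    then have fS: "finite S" and Ss: "S \<subseteq> {1..a}" and cS: "card S = k - 1" unfolding Sub_def by (auto intro: finite_subset)
    have "card ({1..a} - S) = Suc a - k" using cS Ss k fS by (simp add: card_Diff_subset)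
    then show "card (PFon S \<times> PFon ({1..a} - S)) = pc (k - 1) * pc (Suc a - k)"
      by (simp add: card_cartesian_product PFon_card fS cS)
  qed
  also have "\<dots> = card Sub * (pc (k - 1) * pc (Suc a - k))" by simp
  also have "card Sub = a choose (k - 1)" unfolding Sub_def using n_subsets[of "{1..a}" "k - 1"] by simp
  finally show ?thesis by (simp add: mult_ac)
qed


lemma diff_step:
  fixes g :: "nat \<Rightarrow> real"
  shows "(\<Sum>k\<le>Suc n. real (Suc n choose k) * (-1)^(Suc n - k) * g k)
       = (\<Sum>k\<le>n. real (n choose k) * (-1)^(n-k) * (g (Suc k) - g k))"
proof -
  have e1: "(\<Sum>k\<le>Suc n. real (Suc n choose k) * (-1)^(Suc n - k) * g k)
     = (-1)^(Suc n) * g 0 + (\<Sum>k\<le>n. real (Suc n choose Suc k) * (-1)^(n - k) * g (Suc k))"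
    by (subst sum.atMost_Suc_shift) simp
  have e2: "(\<Sum>k\<le>Suc n. real (n choose k) * (-1)^(Suc n - k) * g k)
     = (-1)^(Suc n) * g 0 + (\<Sum>k\<le>n. real (n choose Suc k) * (-1)^(n - k) * g (Suc k))"
    by (subst sum.atMost_Suc_shift) simp
  have e3: "(\<Sum>k\<le>Suc n. real (n choose k) * (-1)^(Suc n - k) * g k)
     = - (\<Sum>k\<le>n. real (n choose k) * (-1)^(n - k) * g k)"
    by (simp add: Suc_diff_le sum_negf[symmetric])
  show ?thesis
    using e1 e2 e3 by (simp add: algebra_simps sum.distrib sum_subtractf)
qed

lemma fd:
  fixes x :: real
  shows "m \<le> n \<Longrightarrow> (\<Sum>k\<le>n. real (n choose k) * (-1)^(n-k) * (x + real k)^m) = (if m = n then fact n else 0)"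
proof (induction n arbitrary: m x)
  case 0 then show ?case by simp
next
  case (Suc n)
  have "(\<Sum>k\<le>Suc n. real (Suc n choose k) * (-1)^(Suc n-k) * (x + real k)^m)
      = (\<Sum>k\<le>n. real (n choose k) * (-1)^(n-k) * ((x + real (Suc k))^m - (x + real k)^m))"
    by (rule diff_step)
  also have "\<dots> = (\<Sum>k\<le>n. real (n choose k) * (-1)^(n-k) * (\<Sum>i<m. real (m choose i) * (x + real k)^i))"
  proof (rule sum.cong[OF refl])
    fix k
    have "(x + real (Suc k))^m = ((x + real k) + 1)^m" by (simp add: algebra_simps)
    also have "\<dots> = (\<Sum>i\<le>m. real (m choose i) * (x + real k)^i)"
      by (subst binomial_ring) simp
    also have "\<dots> = (\<Sum>i<m. real (m choose i) * (x + real k)^i) + (x + real k)^m"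
      by (simp add: lessThan_Suc_atMost[symmetric])
    finally show "real (n choose k) * (-1)^(n-k) * ((x + real (Suc k))^m - (x + real k)^m)
      = real (n choose k) * (-1)^(n-k) * (\<Sum>i<m. real (m choose i) * (x + real k)^i)" by simp
  qed
  also have "\<dots> = (\<Sum>i<m. real (m choose i) * (\<Sum>k\<le>n. real (n choose k) * (-1)^(n-k) * (x + real k)^i))"
    by (simp add: sum_distrib_left sum_distrib_right mult_ac sum.swap[of _ "{..<m}"])
  also have "\<dots> = (\<Sum>i<m. real (m choose i) * (if i = n then fact n else 0))"
    by (rule sum.cong[OF refl]) (use Suc in auto)
  also have "\<dots> = (if m = Suc n then fact (Suc n) else 0)"
  proof (cases "m = Suc n")
    case True
    then have "(\<Sum>i<m. real (m choose i) * (if i = n then fact n else 0)) = real (Suc n choose n) * fact n"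
      by (simp add: sum.delta' if_distrib[of "\<lambda>v. _ * v"] cong: if_cong)
    then show ?thesis using True by (simp add: algebra_simps)
  next
    case False
    then have "m \<le> n" using Suc by simp
    then show ?thesis using False by (intro trans[OF sum.neutral]) auto
  qed
  finally show ?case .
qed

definition Bs :: "nat \<Rightarrow> real \<Rightarrow> real \<Rightarrow> real" where
  "Bs a x y = (\<Sum>j\<le>a. real (a choose j) * (x + real j)^j * (y + real (a - j))^(a - j))"

definition ff :: "nat \<Rightarrow> nat \<Rightarrow> real" where
  "ff a k = (\<Prod>i<k. (real a - real i))"

definition Rs :: "nat \<Rightarrow> real \<Rightarrow> real" where
  "Rs a s = (\<Sum>k\<le>a. ff a k * s^(a - k))"

lemma ff_0 [simp]: "ff a 0 = 1" by (simp add: ff_def)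

lemma ff_Suc_Suc: "ff (Suc a) (Suc k) = real (Suc a) * ff a k"
  unfolding ff_def by (subst prod.lessThan_Suc_shift) simp

lemma ff_same: "ff a a = fact a"
proof (induction a)
  case 0 then show ?case by (simp add: ff_def)
next
  case (Suc a) then show ?case by (simp add: ff_Suc_Suc)
qed

lemma Rs_Suc: "Rs (Suc a) s = s^(Suc a) + real (Suc a) * Rs a s"
proof -
  have "Rs (Suc a) s = ff (Suc a) 0 * s^(Suc a) + (\<Sum>k\<le>a. ff (Suc a) (Suc k) * s^(a - k))"
    unfolding Rs_def by (subst sum.atMost_Suc_shift) simp
  also have "\<dots> = s^(Suc a) + real (Suc a) * Rs a s"
    by (simp add: ff_Suc_Suc Rs_def sum_distrib_left mult_ac)
  finally show ?thesis .
qed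

lemma Rs_zero: "Rs a 0 = fact a"
proof -
  have "Rs a 0 = (\<Sum>k\<le>a. if k = a then ff a k else 0)"
    unfolding Rs_def by (rule sum.cong) auto
  also have "\<dots> = fact a" by (simp add: ff_same)
  finally show ?thesis .
qed

lemma Rs_deriv: "(Rs (Suc a) has_real_derivative (real (Suc a) * Rs a s)) (at s)"
proof -
  have "(Rs (Suc a) has_real_derivative (\<Sum>k\<le>Suc a. ff (Suc a) k * (real (Suc a - k) * s^(Suc a - k - 1)))) (at s)"
    unfolding Rs_def[abs_def]
    apply (auto intro!: derivative_eq_intros)
    apply (rule sum.cong)
     apply (auto simp: mult_ac)
    done
  moreover have "(\<Sum>k\<le>Suc a. ff (Suc a) k * (real (Suc a - k) * s^(Suc a - k - 1))) = real (Suc a) * Rs a s"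
  proof -
    have "(\<Sum>k\<le>Suc a. ff (Suc a) k * (real (Suc a - k) * s^(Suc a - k - 1)))
        = (\<Sum>k\<le>a. ff (Suc a) k * (real (Suc a - k) * s^(Suc a - k - 1)))"
      by (simp only: sum.atMost_Suc diff_self_eq_0 of_nat_0 mult_zero_left mult_zero_right add_0_right)
    also have "\<dots> = (\<Sum>k\<le>a. real (Suc a) * (ff a k * s^(a - k)))"
    proof (rule sum.cong[OF refl])
      fix k assume k: "k \<in> {..a}"
      have "ff (Suc a) k * real (Suc a - k) = ff (Suc a) (Suc k)"
        unfolding ff_def using k by (simp add: of_nat_diff)
      then show "ff (Suc a) k * (real (Suc a - k) * s^(Suc a - k - 1)) = real (Suc a) * (ff a k * s^(a - k))"
        using k by (simp add: ff_Suc_Suc Suc_diff_le mult_ac)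
    qed
    finally show ?thesis by (simp add: Rs_def sum_distrib_left)
  qed
  ultimately show ?thesis by simp
qed

lemma Bs_deriv: "((\<lambda>y. Bs (Suc a) x y) has_real_derivative (real (Suc a) * Bs a x (y + 1))) (at y)"
proof -
  have "((\<lambda>y. Bs (Suc a) x y) has_real_derivative
     (\<Sum>j\<le>Suc a. real (Suc a choose j) * (x + real j)^j * (real (Suc a - j) * (y + real (Suc a - j))^(Suc a - j - 1)))) (at y)"
    unfolding Bs_def
    apply (auto intro!: derivative_eq_intros)
    apply (rule sum.cong)
     apply (auto simp: mult_ac)
    done
  moreover have "(\<Sum>j\<le>Suc a. real (Suc a choose j) * (x + real j)^j * (real (Suc a - j) * (y + real (Suc a - j))^(Suc a - j - 1)))
     = real (Suc a) * Bs a x (y + 1)"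
  proof -
    have "(\<Sum>j\<le>Suc a. real (Suc a choose j) * (x + real j)^j * (real (Suc a - j) * (y + real (Suc a - j))^(Suc a - j - 1)))
        = (\<Sum>j\<le>a. real (Suc a choose j) * (x + real j)^j * (real (Suc a - j) * (y + real (Suc a - j))^(Suc a - j - 1)))"
      by (simp only: sum.atMost_Suc diff_self_eq_0 of_nat_0 mult_zero_left mult_zero_right add_0_right)
    also have "\<dots> = (\<Sum>j\<le>a. real (Suc a) * (real (a choose j) * (x + real j)^j * (y + 1 + real (a - j))^(a - j)))"
    proof (rule sum.cong[OF refl])
      fix j assume j: "j \<in> {..a}"
      have c: "real (Suc a choose j) * real (Suc a - j) = real (Suc a) * real (a choose j)"
        using binomial_absorb_comp[of "Suc a" j] by (metis diff_Suc_1 of_nat_mult mult.commute)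
      have e1: "y + real (Suc a - j) = y + 1 + real (a - j)" using j by (simp add: Suc_diff_le)
      have e2: "Suc a - j - 1 = a - j" by simp
      have "real (Suc a choose j) * (x + real j)^j * (real (Suc a - j) * (y + real (Suc a - j))^(Suc a - j - 1))
          = (real (Suc a choose j) * real (Suc a - j)) * ((x + real j)^j * (y + 1 + real (a - j))^(a - j))"
        unfolding e1 e2 by (simp add: ac_simps)
      also have "\<dots> = (real (Suc a) * real (a choose j)) * ((x + real j)^j * (y + 1 + real (a - j))^(a - j))"
        unfolding c ..
      finally show "real (Suc a choose j) * (x + real j)^j * (real (Suc a - j) * (y + real (Suc a - j))^(Suc a - j - 1))
          = real (Suc a) * (real (a choose j) * (x + real j)^j * (y + 1 + real (a - j))^(a - j))"
        by (simp add: ac_simps)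
    qed
    finally show ?thesis by (simp add: Bs_def sum_distrib_left)
  qed
  ultimately show ?thesis by simp
qed

lemma Bs_Rs: "Bs a x y = Rs a (x + y + real a)"
proof (induction a arbitrary: x y)
  case 0 then show ?case by (simp add: Bs_def Rs_def ff_def)
next
  case (Suc a)
  define F where "F y = Bs (Suc a) x y - Rs (Suc a) (x + y + real (Suc a))" for y
  have d: "(F has_real_derivative 0) (at y)" for y
  proof -
    have d1: "((\<lambda>y. Bs (Suc a) x y) has_real_derivative (real (Suc a) * Bs a x (y + 1))) (at y)"
      by (rule Bs_deriv)
    have d0: "((\<lambda>y. x + y + real (Suc a)) has_real_derivative 1) (at y)"
      by (auto intro!: derivative_eq_intros)
    have d2: "((\<lambda>y. Rs (Suc a) (x + y + real (Suc a))) has_real_derivative (real (Suc a) * Rs a (x + y + real (Suc a)) * 1)) (at y)"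
      by (rule DERIV_chain2[OF Rs_deriv d0])
    have "(F has_real_derivative (real (Suc a) * Bs a x (y + 1) - real (Suc a) * Rs a (x + y + real (Suc a)) * 1)) (at y)"
      unfolding F_def[abs_def] by (rule DERIV_diff[OF d1 d2])
    moreover have "Bs a x (y + 1) = Rs a (x + y + real (Suc a))"
      using Suc.IH[of x "y+1"] by (simp add: algebra_simps)
    ultimately show ?thesis by simp
  qed
  have "F y = F (- x - real (Suc a))"
    by (rule DERIV_isconst_all) (use d in blast)
  also have "F (- x - real (Suc a)) = 0"
  proof -
    have "Bs (Suc a) x (- x - real (Suc a)) = (\<Sum>j\<le>Suc a. real (Suc a choose j) * (-1)^(Suc a - j) * (x + real j)^(Suc a))"
      unfolding Bs_def
    proof (rule sum.cong[OF refl])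
      fix j assume j: "j \<in> {..Suc a}"
      have h0: "- x - real (Suc a) + real (Suc a - j) = - (x + real j)" using j by (simp add: of_nat_diff)
      have h1: "(- x - real (Suc a) + real (Suc a - j))^(Suc a - j) = (-1)^(Suc a - j) * (x + real j)^(Suc a - j)"
        unfolding h0 by (rule power_minus)
      have ee: "j + (Suc a - j) = Suc a" using j by simp
      have h2: "(x + real j)^j * (x + real j)^(Suc a - j) = (x + real j)^(Suc a)"
        by (simp only: power_add[symmetric] ee)
      have "real (Suc a choose j) * (x + real j)^j * (- x - real (Suc a) + real (Suc a - j))^(Suc a - j)
          = real (Suc a choose j) * (-1)^(Suc a - j) * ((x + real j)^j * (x + real j)^(Suc a - j))"
        unfolding h1 by (simp only: ac_simps)
      also have "\<dots> = real (Suc a choose j) * (-1)^(Suc a - j) * (x + real j)^(Suc a)"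
        unfolding h2 ..
      finally show "real (Suc a choose j) * (x + real j)^j * (- x - real (Suc a) + real (Suc a - j))^(Suc a - j)
          = real (Suc a choose j) * (-1)^(Suc a - j) * (x + real j)^(Suc a)" .
    qed
    also have "\<dots> = fact (Suc a)" using fd[of "Suc a" "Suc a" x] by simp
    finally show ?thesis unfolding F_def by (simp add: Rs_zero)
  qed
  finally show ?case unfolding F_def by simp
qed


lemma pow_split: "(1 + real j)^j = (1 + real j)^(j-1) + real j * (1 + real j)^(j-1)"
  by (cases j) (simp_all add: algebra_simps)

lemma I1: "(\<Sum>j\<le>a. real (a choose j) * (1 + real j)^(j-1) * (1 + real (a-j))^(a-j)) = (real a + 2)^a"
proof (cases a)
  case 0 then show ?thesis by simp
next
  case (Suc b)
  have "Bs a 1 1 = (\<Sum>j\<le>a. real (a choose j) * (1 + real j)^(j-1) * (1 + real (a-j))^(a-j))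
      + (\<Sum>j\<le>a. real j * real (a choose j) * (1 + real j)^(j-1) * (1 + real (a-j))^(a-j))"
  proof -
    have "Bs a 1 1 = (\<Sum>j\<le>a. real (a choose j) * (1 + real j)^(j-1) * (1 + real (a-j))^(a-j)
        + real j * real (a choose j) * (1 + real j)^(j-1) * (1 + real (a-j))^(a-j))"
      unfolding Bs_def
    proof (rule sum.cong[OF refl])
      fix j
      show "real (a choose j) * (1 + real j) ^ j * (1 + real (a - j)) ^ (a - j) =
         real (a choose j) * (1 + real j)^(j-1) * (1 + real (a-j))^(a-j)
        + real j * real (a choose j) * (1 + real j)^(j-1) * (1 + real (a-j))^(a-j)"
        by (subst pow_split[of j]) (simp add: algebra_simps)
    qed
    then show ?thesis by (simp add: sum.distrib)
  qed
  moreover have "(\<Sum>j\<le>a. real j * real (a choose j) * (1 + real j)^(j-1) * (1 + real (a-j))^(a-j))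
      = real (Suc b) * Bs b 2 1"
  proof -
    have "(\<Sum>j\<le>a. real j * real (a choose j) * (1 + real j)^(j-1) * (1 + real (a-j))^(a-j))
       = (\<Sum>i\<le>b. real (Suc i) * real (Suc b choose Suc i) * (1 + real (Suc i))^i * (1 + real (b-i))^(b-i))"
      unfolding Suc by (subst sum.atMost_Suc_shift) simp
    also have "\<dots> = (\<Sum>i\<le>b. real (Suc b) * (real (b choose i) * (2 + real i)^i * (1 + real (b-i))^(b-i)))"
    proof (rule sum.cong[OF refl])
      fix i
      have c: "real (Suc i) * real (Suc b choose Suc i) = real (Suc b) * real (b choose i)"
        using Suc_times_binomial[of i b] by (metis of_nat_mult)
      have "(1 + real (Suc i)) = 2 + real i" by simp
      then show "real (Suc i) * real (Suc b choose Suc i) * (1 + real (Suc i))^i * (1 + real (b-i))^(b-i)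
          = real (Suc b) * (real (b choose i) * (2 + real i)^i * (1 + real (b-i))^(b-i))"
        using c by (simp add: ac_simps)
    qed
    finally show ?thesis by (simp add: Bs_def sum_distrib_left)
  qed
  moreover have "Bs a 1 1 = (real a + 2)^a + real (Suc b) * Bs b 2 1"
    unfolding Bs_Rs Suc Rs_Suc by (simp add: algebra_simps)
  ultimately show ?thesis by simp
qed

definition pp :: "nat \<Rightarrow> real" where "pp m = (real m + 1)^(m-1)"

lemma E1: "(\<Sum>k\<in>{1..Suc a}. real k * real (a choose (k-1)) * pp (k-1) * pp (Suc a - k)) = pp (Suc a)"
proof -
  have "(\<Sum>k\<in>{1..Suc a}. real k * real (a choose (k-1)) * pp (k-1) * pp (Suc a - k))
      = (\<Sum>j\<in>{0..a}. real (Suc j) * real (a choose j) * pp j * pp (a - j))"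
    by (simp only: One_nat_def sum.shift_bounds_cl_Suc_ivl) simp
  also have "\<dots> = (\<Sum>j\<in>{0..a}. real (a choose j) * (1 + real j)^j * (1 + real (a - j))^(a - j - 1))"
  proof (rule sum.cong[OF refl])
    fix j
    have h: "real (Suc j) * pp j = (1 + real j)^j" unfolding pp_def
      by (cases j) (simp_all add: algebra_simps)
    have "real (Suc j) * real (a choose j) * pp j * pp (a - j) = real (a choose j) * (real (Suc j) * pp j) * pp (a - j)"
      by (simp only: ac_simps)
    also have "\<dots> = real (a choose j) * (1 + real j)^j * pp (a - j)" by (simp only: h)
    finally show "real (Suc j) * real (a choose j) * pp j * pp (a - j) = real (a choose j) * (1 + real j)^j * (1 + real (a - j))^(a - j - 1)"
      unfolding pp_def by (simp add: ac_simps)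
  qed
  also have "\<dots> = (\<Sum>j\<in>{0..a}. real (a choose (a - j)) * (1 + real (a - j))^(a - j) * (1 + real (a - (a - j)))^(a - (a - j) - 1))"
    by (subst sum.atLeastAtMost_rev) simp
  also have "\<dots> = (\<Sum>j\<le>a. real (a choose j) * (1 + real j)^(j-1) * (1 + real (a-j))^(a-j))"
    unfolding atMost_atLeast0
    by (rule sum.cong[OF refl]) (auto simp: binomial_symmetric[symmetric] ac_simps)
  also have "\<dots> = pp (Suc a)" unfolding I1 pp_def by (simp add: algebra_simps)
  finally show ?thesis .
qed

lemma E2: "(\<Sum>k\<in>{1..Suc a}. real k * real (Suc a - k) * real (a choose (k-1)) * pp (k-1) * pp (Suc a - k))
   = Rs a (real a + 2) - (real a + 2)^a"
proof -
  have "(\<Sum>k\<in>{1..Suc a}. real k * real (Suc a - k) * real (a choose (k-1)) * pp (k-1) * pp (Suc a - k))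
      = (\<Sum>k\<in>{1..Suc a}. real k * real (a choose (k-1)) * pp (k-1) * (1 + real (Suc a - k))^(Suc a - k))
        - (\<Sum>k\<in>{1..Suc a}. real k * real (a choose (k-1)) * pp (k-1) * pp (Suc a - k))"
    unfolding sum_subtractf[symmetric]
  proof (rule sum.cong[OF refl])
    fix k
    have "real (Suc a - k) * pp (Suc a - k) = (1 + real (Suc a - k))^(Suc a - k) - pp (Suc a - k)"
      unfolding pp_def by (cases "Suc a - k") (simp_all add: algebra_simps)
    then have "real k * real (a choose (k-1)) * pp (k-1) * (real (Suc a - k) * pp (Suc a - k))
      = real k * real (a choose (k-1)) * pp (k-1) * ((1 + real (Suc a - k))^(Suc a - k) - pp (Suc a - k))"
      by simp
    then show "real k * real (Suc a - k) * real (a choose (k-1)) * pp (k-1) * pp (Suc a - k)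
      = real k * real (a choose (k-1)) * pp (k-1) * (1 + real (Suc a - k))^(Suc a - k)
        - real k * real (a choose (k-1)) * pp (k-1) * pp (Suc a - k)"
      by (simp only: right_diff_distrib ac_simps)
  qed
  also have "(\<Sum>k\<in>{1..Suc a}. real k * real (a choose (k-1)) * pp (k-1) * (1 + real (Suc a - k))^(Suc a - k)) = Bs a 1 1"
  proof -
    have "(\<Sum>k\<in>{1..Suc a}. real k * real (a choose (k-1)) * pp (k-1) * (1 + real (Suc a - k))^(Suc a - k))
      = (\<Sum>j\<in>{0..a}. real (Suc j) * real (a choose j) * pp j * (1 + real (a - j))^(a - j))"
      by (simp only: One_nat_def sum.shift_bounds_cl_Suc_ivl) simp
    also have "\<dots> = Bs a 1 1" unfolding Bs_def atMost_atLeast0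
    proof (rule sum.cong[OF refl])
      fix j
      have h: "real (Suc j) * pp j = (1 + real j)^j" unfolding pp_def
        by (cases j) (simp_all add: algebra_simps)
      have "real (Suc j) * real (a choose j) * pp j * (1 + real (a - j))^(a - j) = real (a choose j) * (real (Suc j) * pp j) * (1 + real (a - j))^(a - j)"
        by (simp only: ac_simps)
      also have "\<dots> = real (a choose j) * (1 + real j)^j * (1 + real (a - j))^(a - j)" by (simp only: h)
      finally show "real (Suc j) * real (a choose j) * pp j * (1 + real (a - j))^(a - j) = real (a choose j) * (1 + real j)^j * (1 + real (a - j))^(a - j)" .
    qed
    finally show ?thesis .
  qed
  also have "Bs a 1 1 = Rs a (real a + 2)" unfolding Bs_Rs by (simp add: algebra_simps)
  also have "(\<Sum>k\<in>{1..Suc a}. real k * real (a choose (k-1)) * pp (k-1) * pp (Suc a - k)) = pp (Suc a)"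
    by (rule E1)
  also have "pp (Suc a) = (real a + 2)^a" by (simp add: pp_def add_ac)
  finally show ?thesis .
qed


lemma Rs_div: assumes "s > 0" shows "Rs a s / s^a = (\<Sum>k\<le>a. ff a k / s^k)"
  unfolding Rs_def sum_divide_distrib
proof (rule sum.cong[OF refl])
  fix k assume "k \<in> {..a}"
  then have "s^a = s^k * s^(a-k)" by (simp add: power_add[symmetric])
  then show "ff a k * s ^ (a - k) / s ^ a = ff a k / s ^ k" using assms by simp
qed

lemma ff_Suc: "ff a (Suc k) = ff a k * (real a - real k)"
  unfolding ff_def by simp

lemma u_bounds:
  fixes a :: nat defines "s \<equiv> real a + 2"
  shows "k \<le> a \<Longrightarrow> 0 \<le> ff a k / s^k \<and> ff a k / s^k \<le> 1"
proof (induction k)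
  case 0 then show ?case by simp
next
  case (Suc k)
  then have IH: "0 \<le> ff a k / s^k" "ff a k / s^k \<le> 1" by auto
  have eq: "ff a (Suc k) / s^(Suc k) = (ff a k / s^k) * ((real a - real k) / s)"
    by (simp add: ff_Suc)
  have s: "s > 0" unfolding s_def by simp
  have f: "0 \<le> (real a - real k) / s" "(real a - real k) / s \<le> 1"
    using Suc.prems s by (auto simp: s_def)
  show ?case unfolding eq using mult_nonneg_nonneg[OF IH(1) f(1)] mult_le_one[OF IH(2) f(1) f(2)] by blast
qed

lemma u_geom:
  fixes a K :: nat defines "s \<equiv> real a + 2"
  assumes "K \<le> k" "k \<le> a"
  shows "ff a k / s^k \<le> ((s - real K) / s)^(k - K)"
  using assms(2,3)
proof (induction k rule: dec_induct)
  case base then show ?case using u_bounds[of K a] unfolding s_def by simp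
next
  case (step k)
  have eq: "ff a (Suc k) / s^(Suc k) = (ff a k / s^k) * ((real a - real k) / s)"
    by (simp add: ff_Suc)
  have s: "s > 0" unfolding s_def by simp
  have f: "0 \<le> (real a - real k) / s" "(real a - real k) / s \<le> (s - real K) / s"
    using step s by (auto simp: s_def divide_right_mono)
  have IH: "ff a k / s^k \<le> ((s - real K) / s)^(k - K)" using step by simp
  have nn: "0 \<le> ff a k / s^k" using u_bounds[of k a] step unfolding s_def by simp
  have "ff a (Suc k) / s^(Suc k) \<le> ((s - real K) / s)^(k - K) * ((s - real K) / s)"
    unfolding eq
  proof (rule mult_mono[OF IH f(2) _ f(1)])
    have "0 \<le> (s - real K) / s" using step s by (simp add: s_def)
    then show "0 \<le> ((s - real K) / s)^(k - K)" by simp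
  qed
  also have "\<dots> = ((s - real K) / s)^(Suc k - K)" using step by (simp add: Suc_diff_le)
  finally show ?case .
qed

lemma Q_bound:
  assumes K: "1 \<le> K"
  shows "Rs a (real a + 2) / (real a + 2)^a \<le> real K + (real a + 2) / real K"
proof -
  define s where "s = real a + 2"
  define \<theta> where "\<theta> = (s - real K) / s"
  have s: "s > 0" unfolding s_def by simp
  have Kpos: "real K > 0" using K by simp
  have eq: "Rs a s / s^a = (\<Sum>k\<le>a. ff a k / s^k)" by (rule Rs_div[OF s])
  show ?thesis
  proof (cases "a < K")
    case True
    have "(\<Sum>k\<le>a. ff a k / s^k) \<le> (\<Sum>k\<le>a. 1)"
      by (rule sum_mono) (use u_bounds[of _ a] in \<open>auto simp: s_def\<close>)
    also have "\<dots> = real a + 1" by simp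
    also have "\<dots> \<le> real K" using True by simp
    finally show ?thesis using eq Kpos s unfolding s_def by (smt (verit) divide_pos_pos)
  next
    case False
    then have Ka: "K \<le> a" by simp
    have th0: "0 \<le> \<theta>" "\<theta> < 1" unfolding \<theta>_def using Ka s Kpos by (auto simp: s_def)
    have split: "{..a} = {..<K} \<union> {K..a}" using Ka by auto
    have "(\<Sum>k\<le>a. ff a k / s^k) = (\<Sum>k\<in>{..<K}. ff a k / s^k) + (\<Sum>k\<in>{K..a}. ff a k / s^k)"
      unfolding split by (rule sum.union_disjoint) auto
    also have "(\<Sum>k\<in>{..<K}. ff a k / s^k) \<le> (\<Sum>k\<in>{..<K}. 1)"
      by (rule sum_mono) (use u_bounds[of _ a] Ka in \<open>auto simp: s_def\<close>)
    also have "(\<Sum>k\<in>{K..a}. ff a k / s^k) \<le> (\<Sum>k\<in>{K..a}. \<theta>^(k - K))"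
      by (rule sum_mono) (use u_geom[of K _ a] in \<open>auto simp: s_def \<theta>_def\<close>)
    also have "(\<Sum>k\<in>{K..a}. \<theta>^(k - K)) = (\<Sum>i<Suc (a - K). \<theta>^i)"
    proof -
      have "(\<Sum>k\<in>{K..a}. \<theta>^(k - K)) = (\<Sum>k\<in>{0 + K..(a - K) + K}. \<theta>^(k - K))" using Ka by simp
      also have "\<dots> = (\<Sum>i\<in>{0..a - K}. \<theta>^i)" by (subst sum.shift_bounds_cl_nat_ivl) simp
      finally show ?thesis by (simp add: atLeast0AtMost lessThan_Suc_atMost)
    qed
    also have "\<dots> = (1 - \<theta>^Suc (a - K)) / (1 - \<theta>)" using th0 by (subst sum_gp_strict) auto
    also have "\<dots> \<le> 1 / (1 - \<theta>)" using th0 by (simp add: divide_right_mono)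
    also have "1 / (1 - \<theta>) = s / real K" unfolding \<theta>_def using s by (simp add: field_simps)
    finally have "(\<Sum>k\<le>a. ff a k / s^k) \<le> real K + s / real K" by simp
    then show ?thesis using eq unfolding s_def by simp
  qed
qed


lemma dsum: "(\<Sum>j\<in>{1..n}. \<Sum>k\<in>{j..n}. f k) = (\<Sum>k\<in>{1..n}. k * (f k :: nat))"
proof (induction n)
  case 0 then show ?case by simp
next
  case (Suc n)
  have "(\<Sum>j\<in>{1..Suc n}. \<Sum>k\<in>{j..Suc n}. f k) = (\<Sum>j\<in>{1..n}. \<Sum>k\<in>{j..Suc n}. f k) + f (Suc n)"
    by (simp add: sum.cl_ivl_Suc)
  also have "(\<Sum>j\<in>{1..n}. \<Sum>k\<in>{j..Suc n}. f k) = (\<Sum>j\<in>{1..n}. (\<Sum>k\<in>{j..n}. f k) + f (Suc n))"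
    by (rule sum.cong[OF refl]) (simp add: sum.cl_ivl_Suc)
  also have "\<dots> = (\<Sum>j\<in>{1..n}. \<Sum>k\<in>{j..n}. f k) + n * f (Suc n)" by (simp add: sum.distrib)
  finally show ?case using Suc by (simp add: sum.cl_ivl_Suc)
qed

lemma PF_Suc_union: "PFon {0..<Suc a} = (\<Union>j\<in>{1..Suc a}. Sj a j)"
proof -
  have "p 0 \<in> {1..Suc a}" if "p \<in> PFon {0..<Suc a}" for p
    using that unfolding PFon_def by (auto simp: PiE_def Pi_def)
  then show ?thesis unfolding Sj_def by blast
qed

lemma pc_Suc: "pc (Suc a) = (\<Sum>k\<in>{1..Suc a}. k * card (Dk a k))"
proof -
  have "pc (Suc a) = card (\<Union>j\<in>{1..Suc a}. Sj a j)" unfolding pc_def PF_Suc_union ..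
  also have "\<dots> = (\<Sum>j\<in>{1..Suc a}. card (Sj a j))"
  proof (rule card_UN_disjoint)
    show "\<forall>i\<in>{1..Suc a}. finite (Sj a i)"
      unfolding Sj_def using finite_PFon[of "{0..<Suc a}"] by auto
  qed (auto simp: Sj_def)
  also have "\<dots> = (\<Sum>j\<in>{1..Suc a}. \<Sum>k\<in>{j..Suc a}. card (Dk a k))"
    by (rule sum.cong[OF refl]) (rule card_Sj)
  also have "\<dots> = (\<Sum>k\<in>{1..Suc a}. k * card (Dk a k))" by (rule dsum)
  finally show ?thesis .
qed

lemma pc_0: "pc 0 = 1"
proof -
  have "PFon {0..<0} = {\<lambda>x. undefined}" unfolding PFon_def by (auto simp: PiE_def extensional_def)
  then show ?thesis unfolding pc_def by simp
qed

lemma pc_closed: "real (pc m) = pp m"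
proof (induction m rule: less_induct)
  case (less m)
  show ?case
  proof (cases m)
    case 0 then show ?thesis by (simp add: pc_0 pp_def)
  next
    case (Suc a)
    have "real (pc m) = (\<Sum>k\<in>{1..Suc a}. real k * real (card (Dk a k)))"
      unfolding Suc pc_Suc by (simp add: algebra_simps)
    also have "\<dots> = (\<Sum>k\<in>{1..Suc a}. real k * real (a choose (k-1)) * pp (k-1) * pp (Suc a - k))"
    proof (rule sum.cong[OF refl])
      fix k assume k: "k \<in> {1..Suc a}"
      have "k - 1 < m" using k Suc by (simp; linarith)
      then have "real (pc (k - 1)) = pp (k - 1)" by (rule less)
      moreover have "real (pc (Suc a - k)) = pp (Suc a - k)" using less k Suc by simp
      ultimately show "real k * real (card (Dk a k)) = real k * real (a choose (k-1)) * pp (k-1) * pp (Suc a - k)"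
        unfolding card_Dk[OF k] by simp
    qed
    also have "\<dots> = pp m" unfolding Suc by (rule E1)
    finally show ?thesis .
  qed
qed

lemma Pbar_val:
  assumes j: "j \<in> {1..Suc a}"
  shows "Pbar_first (Suc a) j = 1 / real (Suc a)"
proof -
  define n where "n = Suc a"
  have e: "{f \<in> {0..<n} \<rightarrow>\<^sub>E {1..n}. f 0 = j} = PiE {0..<n} (\<lambda>t. if t = 0 then {j} else {1..n})"
    using j unfolding n_def by (auto simp: PiE_iff extensional_def split: if_splits)
  have c1: "card ({0..<n} \<rightarrow>\<^sub>E {1..n}) = n ^ n" by (simp add: card_PiE)
  have "card (PiE {0..<n} (\<lambda>t. if t = 0 then {j} else {1..n})) = (\<Prod>t\<in>{0..<n}. card (if t = 0 then {j} else {1..n}))"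
    by (simp add: card_PiE)
  also have "\<dots> = (\<Prod>t<Suc a. card (if t = 0 then {j} else {1..n}))" unfolding n_def atLeast0LessThan ..
  also have "\<dots> = n ^ a" by (subst prod.lessThan_Suc_shift) simp
  finally have c2: "card {f \<in> {0..<n} \<rightarrow>\<^sub>E {1..n}. f 0 = j} = n ^ a" unfolding e .
  have nn: "real (n ^ n) = real n * real (n ^ a)" unfolding n_def by (simp add: algebra_simps)
  have np: "real (n ^ a) > 0" unfolding n_def by simp
  show ?thesis unfolding Pbar_first_def n_def[symmetric] c1 c2 nn using np by simp
qed

lemma P_val:
  assumes j: "j \<in> {1..Suc a}"
  shows "P_first (Suc a) j = (\<Sum>k\<in>{j..Suc a}. real (card (Dk a k))) / real (pc (Suc a))"
proof -
  have e: "{p \<in> parking_functions (Suc a). p 0 = j} = Sj a j" unfolding Sj_def pf_eq ..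
  have "P_first (Suc a) j = real (card (Sj a j)) / real (pc (Suc a))"
    unfolding P_first_def e by (simp add: pf_eq pc_def)
  also have "real (card (Sj a j)) = (\<Sum>k\<in>{j..Suc a}. real (card (Dk a k)))"
    unfolding card_Sj[OF j] by (simp only: of_nat_sum)
  finally show ?thesis .
qed

lemma abs_sum_ind:
  assumes k: "k \<in> {1..n}"
  shows "(\<Sum>j\<in>{1..n}. \<bar>(if j \<le> k then 1 else 0) - real k / real n\<bar>) = 2 * real k * real (n - k) / real n"
proof -
  have n: "real n > 0" and kn: "real k \<le> real n" using k by auto
  have "(\<Sum>j\<in>{1..n}. \<bar>(if j \<le> k then 1 else 0) - real k / real n\<bar>)
      = (\<Sum>j\<in>{1..n}. if j \<le> k then 1 - real k / real n else real k / real n)"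
    by (rule sum.cong[OF refl]) (use n kn in \<open>auto simp: field_simps\<close>)
  also have "\<dots> = (\<Sum>j\<in>{1..n} \<inter> {j. j \<le> k}. 1 - real k / real n) + (\<Sum>j\<in>{1..n} \<inter> - {j. j \<le> k}. real k / real n)"
    by (rule sum.If_cases) simp
  also have "{1..n} \<inter> {j. j \<le> k} = {1..k}" using k by auto
  also have "{1..n} \<inter> - {j. j \<le> k} = {k<..n}" by auto
  finally have "(\<Sum>j\<in>{1..n}. \<bar>(if j \<le> k then 1 else 0) - real k / real n\<bar>)
      = real k * (1 - real k / real n) + real (n - k) * (real k / real n)" by simp
  also have "\<dots> = 2 * real k * real (n - k) / real n" using n kn k by (simp add: of_nat_diff field_simps)
  finally show ?thesis .
qed

lemma tv_bound:
  "tv_dist (Suc a) \<le> (\<Sum>k\<in>{1..Suc a}. real (card (Dk a k)) * real k * real (Suc a - k)) / (real (Suc a) * real (pc (Suc a)))"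
proof -
  define n where "n = Suc a"
  define d where "d k = real (card (Dk a k))" for k
  define P where "P = real (pc n)"
  have Pdef: "P = (\<Sum>k\<in>{1..n}. real k * d k)" unfolding P_def n_def d_def pc_Suc by (simp only: of_nat_sum of_nat_mult)
  have Ppos: "P > 0" unfolding P_def n_def pc_closed pp_def by simp
  have npos: "real n > 0" unfolding n_def by simp
  have dnn: "d k \<ge> 0" for k unfolding d_def by simp
  define c where "c j k = (if j \<le> k then 1 else 0) - real k / real n" for j k :: nat
  have diff: "P_first n j - Pbar_first n j = (\<Sum>k\<in>{1..n}. (d k / P) * c j k)" if j: "j \<in> {1..n}" for j
  proof -
    have A: "(\<Sum>k\<in>{j..n}. d k) = (\<Sum>k\<in>{1..n}. if j \<le> k then d k else 0)"
    proof -
      have "(\<Sum>k\<in>{1..n}. if j \<le> k then d k else 0) = (\<Sum>k\<in>{1..n} \<inter> {k. j \<le> k}. d k) + (\<Sum>k\<in>{1..n} \<inter> - {k. j \<le> k}. 0)"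
        by (rule sum.If_cases) simp
      also have "{1..n} \<inter> {k. j \<le> k} = {j..n}" using j by auto
      finally show ?thesis by simp
    qed
    have "(\<Sum>k\<in>{1..n}. (d k / P) * c j k) = (\<Sum>k\<in>{1..n}. (if j \<le> k then d k else 0)) / P - (\<Sum>k\<in>{1..n}. real k * d k) / (real n * P)"
    proof -
      have "(\<Sum>k\<in>{1..n}. (d k / P) * c j k) = (\<Sum>k\<in>{1..n}. (if j \<le> k then d k else 0) / P - real k * d k / (real n * P))"
        by (rule sum.cong[OF refl]) (use Ppos npos in \<open>auto simp: c_def field_simps\<close>)
      then show ?thesis by (simp add: sum_subtractf sum_divide_distrib)
    qed
    also have "\<dots> = (\<Sum>k\<in>{j..n}. d k) / P - 1 / real n" unfolding A Pdef[symmetric] using Ppos by simp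
    also have "\<dots> = P_first n j - Pbar_first n j"
      using P_val[of j a] Pbar_val[of j a] j unfolding n_def d_def P_def by simp
    finally show ?thesis by simp
  qed
  have "tv_dist n = (1/2) * (\<Sum>j\<in>{1..n}. \<bar>\<Sum>k\<in>{1..n}. (d k / P) * c j k\<bar>)"
    unfolding tv_dist_def by (simp add: diff)
  also have "\<dots> \<le> (1/2) * (\<Sum>j\<in>{1..n}. \<Sum>k\<in>{1..n}. (d k / P) * \<bar>c j k\<bar>)"
  proof -
    have "\<bar>\<Sum>k\<in>{1..n}. (d k / P) * c j k\<bar> \<le> (\<Sum>k\<in>{1..n}. (d k / P) * \<bar>c j k\<bar>)" for j
    proof -
      have "\<bar>\<Sum>k\<in>{1..n}. (d k / P) * c j k\<bar> \<le> (\<Sum>k\<in>{1..n}. \<bar>(d k / P) * c j k\<bar>)" by (rule sum_abs)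
      also have "\<dots> = (\<Sum>k\<in>{1..n}. (d k / P) * \<bar>c j k\<bar>)" using dnn Ppos by (simp add: abs_mult)
      finally show ?thesis .
    qed
    then show ?thesis by (intro mult_left_mono sum_mono) auto
  qed
  also have "(\<Sum>j\<in>{1..n}. \<Sum>k\<in>{1..n}. (d k / P) * \<bar>c j k\<bar>) = (\<Sum>k\<in>{1..n}. (d k / P) * (\<Sum>j\<in>{1..n}. \<bar>c j k\<bar>))"
    by (subst sum.swap) (simp add: sum_distrib_left)
  also have "\<dots> = (\<Sum>k\<in>{1..n}. (d k / P) * (2 * real k * real (n - k) / real n))"
  proof (rule sum.cong[OF refl])
    fix k assume k: "k \<in> {1..n}"
    show "(d k / P) * (\<Sum>j\<in>{1..n}. \<bar>c j k\<bar>) = (d k / P) * (2 * real k * real (n - k) / real n)"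
      unfolding c_def abs_sum_ind[OF k] ..
  qed
  also have "(1/2) * \<dots> = (\<Sum>k\<in>{1..n}. d k * real k * real (n - k)) / (real n * P)"
  proof -
    have "(1/2) * (\<Sum>k\<in>{1..n}. (d k / P) * (2 * real k * real (n - k) / real n))
        = (\<Sum>k\<in>{1..n}. d k * real k * real (n - k) / (real n * P))"
      unfolding sum_distrib_left by (rule sum.cong[OF refl]) (use Ppos npos in \<open>simp add: field_simps\<close>)
    then show ?thesis by (simp add: sum_divide_distrib)
  qed
  finally show ?thesis unfolding n_def d_def P_def .
qed

lemma tv_bound2:
  assumes K: "1 \<le> K"
  shows "tv_dist (Suc a) \<le> real K / real (Suc a) + 2 / real K"
proof -
  have s: "(real a + 2)^a > 0" by simp
  have E: "(\<Sum>k\<in>{1..Suc a}. real (card (Dk a k)) * real k * real (Suc a - k)) = Rs a (real a + 2) - (real a + 2)^a"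
  proof -
    have "(\<Sum>k\<in>{1..Suc a}. real (card (Dk a k)) * real k * real (Suc a - k))
       = (\<Sum>k\<in>{1..Suc a}. real k * real (Suc a - k) * real (a choose (k-1)) * pp (k-1) * pp (Suc a - k))"
      by (rule sum.cong[OF refl]) (simp add: card_Dk pc_closed)
    then show ?thesis using E2 by simp
  qed
  have P: "real (pc (Suc a)) = (real a + 2)^a" unfolding pc_closed pp_def by (simp add: add_ac)
  have "tv_dist (Suc a) \<le> (Rs a (real a + 2) - (real a + 2)^a) / (real (Suc a) * (real a + 2)^a)"
    using tv_bound[of a] unfolding E P .
  also have "\<dots> = (Rs a (real a + 2) / (real a + 2)^a - 1) / real (Suc a)"
    using s by (simp add: field_simps)
  also have "\<dots> \<le> (real K + (real a + 2) / real K - 1) / real (Suc a)"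
    by (rule divide_right_mono) (use Q_bound[OF K, of a] in auto)
  also have "\<dots> \<le> (real K + (real a + 2) / real K) / real (Suc a)"
    by (rule divide_right_mono) auto
  also have "\<dots> = real K / real (Suc a) + (real a + 2) / real K / real (Suc a)"
    by (simp add: add_divide_distrib)
  also have "\<dots> \<le> real K / real (Suc a) + 2 / real K"
  proof -
    have Kp: "real K > 0" using K by simp
    have "(real a + 2) / real K / real (Suc a) = ((real a + 2) / real (Suc a)) / real K" by simp
    also have "\<dots> \<le> 2 / real K"
      by (rule divide_right_mono) (simp_all add: divide_le_eq)
    finally show ?thesis by simp
  qed
  finally show ?thesis .
qed

theorem corollary4:
  shows "tv_dist \<longlonglongrightarrow> 0"
proof (rule LIMSEQ_I)
  fix r :: real assume r: "0 < r"
  obtain K :: nat where K: "4 / r < real K" using reals_Archimedean2 by blast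
  have K1: "1 \<le> K" using K r by (metis less_le_not_le not_less_eq_eq of_nat_0 of_nat_le_0_iff zero_less_divide_iff zero_less_numeral le_eq_less_or_eq less_one nat_neq_iff)
  have Kr: "2 / real K < r / 2" using K r K1 by (simp add: field_simps)
  obtain N :: nat where N: "2 * real K / r < real N" using reals_Archimedean2 by blast
  show "\<exists>no. \<forall>n\<ge>no. norm (tv_dist n - 0) < r"
  proof (intro exI allI impI)
    fix n assume n: "Suc N \<le> n"
    then obtain a where na: "n = Suc a" and aN: "N \<le> a" by (cases n) auto
    have nn: "0 \<le> tv_dist n" unfolding tv_dist_def by (simp add: sum_nonneg)
    have "real K / real (Suc a) < r / 2"
    proof -
      have "2 * real K / r < real (Suc a)" using N aN by linarith
      then show ?thesis using r by (simp add: field_simps)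
    qed
    then have "tv_dist n < r" using tv_bound2[OF K1, of a] Kr unfolding na by linarith
    then show "norm (tv_dist n - 0) < r" using nn by simp
  qed
qed

end
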